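(* Let $\mathbb F\subseteq\mathbb D$ be a finite subset of local height $n$. Then for all Banach spaces $X,Y$ and all bounded linear operators $T:X\to Y$, $$\tau(T|\mathcal H(\mathbb F))\le\tau(T|\mathcal H(\mathbb D_1^n)).$$
   Context: Dyadic intervals: $\Delta_k^{(j)}:=[\frac{j-1}{2^k},\frac{j}{2^k})$ for $k\ge0$ (so $\Delta_0^{(1)}=[0,1)$). Haar functions: for $k\ge1$, integer $j$, $\chi_k^{(j)}(t)=+2^{(k-1)/2}$ on $\Delta_k^{(2j-1)}$, $-2^{(k-1)/2}$ on $\Delta_k^{(2j)}$, $0$ otherwise, $t\in[0,1)$. Dyadic tree $\mathbb D:=\{(k,j):k=1,2,\dots;\ j=1,\dots,2^{k-1}\}$; $\mathbb D_m^n:=\{(k,j):k=m,\dots,n;\ j=1,\dots,2^{k-1}\}$. Branches: for $t\in[0,1)$, $\mathbb B(t):=\{(k,j)\in\mathbb D: t\in\Delta_{k-1}^{(j)}\}$. Local height of finite $\mathbb F\subseteq\mathbb D$: $\mathrm{lh}(\mathbb F):=\max_{t\in[0,1)}|\mathbb F\cap\mathbb B(t)|$. For finite $\mathbb F\subseteq\mathbb D$ and bounded linear $T:X\to Y$, $\tau(T|\mathcal H(\mathbb F))$ is the least $c\ge0$ such that $\|\sum_{(k,j)\in\mathbb F}Tx_k^{(j)}\chi_k^{(j)}|L_2\|\le c(\sum_{(k,j)\in\mathbb F}\|x_k^{(j)}\|^2)^{1/2}$ for all $x_k^{(j)}\in X$, where $\|\cdot|L_2\|$ is the Bochner $L_2([0,1),Y)$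 norm. *)

theory Defs
  imports "HOL-Analysis.Analysis"
begin

definition dyadic_interval :: "nat \<Rightarrow> int \<Rightarrow> real set" where
  "dyadic_interval k j = {(real_of_int j - 1) / 2 ^ k ..< real_of_int j / 2 ^ k}"

definition haar :: "nat \<Rightarrow> int \<Rightarrow> real \<Rightarrow> real" where
  "haar k j t =
     (if t \<in> {0..<1} \<and> t \<in> dyadic_interval k (2 * j - 1) then 2 powr ((real k - 1) / 2)
      else if t \<in> {0..<1} \<and> t \<in> dyadic_interval k (2 * j) then - (2 powr ((real k - 1) / 2))
      else 0)"

definition dyadic_tree :: "(nat \<times> nat) set" where
  "dyadic_tree = {(k, j). 1 \<le> k \<and> 1 \<le> j \<and> j \<le> 2 ^ (k - 1)}"

definition dyadic_layers :: "nat \<Rightarrow> nat \<Rightarrow> (nat \<times> nat) set" where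
  "dyadic_layers m n = {(k, j). m \<le> k \<and> k \<le> n \<and> 1 \<le> j \<and> j \<le> 2 ^ (k - 1)}"

definition branch :: "real \<Rightarrow> (nat \<times> nat) set" where
  "branch t = {(k, j) \<in> dyadic_tree. t \<in> dyadic_interval (k - 1) (int j)}"

definition local_height :: "(nat \<times> nat) set \<Rightarrow> nat" where
  "local_height F = Max ((\<lambda>t. card (F \<inter> branch t)) ` {0..<1})"

definition L2_norm01 :: "(real \<Rightarrow> 'b::real_normed_vector) \<Rightarrow> real" where
  "L2_norm01 f = sqrt (LINT t:{0..<1}|lborel. (norm (f t))\<^sup>2)"

definition tau :: "('a::real_normed_vector \<Rightarrow> 'b::real_normed_vector) \<Rightarrow> (nat \<times> nat) set \<Rightarrow> real" where
  "tau T F = Inf {c. c \<ge> 0 \<and> (\<forall>x :: nat \<times> nat \<Rightarrow> 'a.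
      L2_norm01 (\<lambda>t. \<Sum>(k, j)\<in>F. haar k (int j) t *\<^sub>R T (x (k, j)))
        \<le> c * sqrt (\<Sum>(k, j)\<in>F. (norm (x (k, j)))\<^sup>2))}"

end

theory Submission
  imports Defs
begin

definition desc :: "nat \<times> nat \<Rightarrow> (nat \<times> nat) set" where
  "desc J = {(k', j'). fst J \<le> k' \<and> 1 \<le> j' \<and> (j' - 1) div 2 ^ (k' - fst J) = snd J - 1}"

definition ivl :: "nat \<times> nat \<Rightarrow> real set" where
  "ivl J = dyadic_interval (fst J - 1) (int (snd J))"

definition lc :: "nat \<times> nat \<Rightarrow> nat \<times> nat" where "lc J = (Suc (fst J), 2 * snd J - 1)"
definition rc :: "nat \<times> nat \<Rightarrow> nat \<times> nat" where "rc J = (Suc (fst J), 2 * snd J)"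

definition nd :: "nat \<times> nat \<Rightarrow> bool" where
  "nd J \<longleftrightarrow> 1 \<le> fst J \<and> 1 \<le> snd J \<and> snd J \<le> 2 ^ (fst J - 1)"

definition sc :: "nat \<Rightarrow> real" where "sc k = 2 powr ((real k - 1) / 2)"
definition len :: "nat \<Rightarrow> real" where "len k = 1 / 2 ^ (k - 1)"

lemma nd_tree: "nd J \<longleftrightarrow> J \<in> dyadic_tree"
  by (cases J) (auto simp: nd_def dyadic_tree_def)

lemma pow2: "1 \<le> a \<Longrightarrow> (2::nat)^a = 2 * 2^(a-1)"
  by (cases a) auto

lemma nd_lc: "nd J \<Longrightarrow> nd (lc J)"
  by (cases J) (auto simp: nd_def lc_def pow2)

lemma nd_rc: "nd J \<Longrightarrow> nd (rc J)"
  by (cases J) (auto simp: nd_def rc_def pow2)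

lemma desc_self: "1 \<le> snd J \<Longrightarrow> J \<in> desc J"
  by (cases J) (auto simp: desc_def)

lemma desc_level: "I \<in> desc J \<Longrightarrow> fst J \<le> fst I"
  by (auto simp: desc_def)

lemma lc_not: "J \<notin> desc (lc J)" and rc_not: "J \<notin> desc (rc J)"
  by (auto simp: desc_def lc_def rc_def)

lemma desc_lc_rc_disj: assumes "1 \<le> snd J" shows "desc (lc J) \<inter> desc (rc J) = {}"
proof -
  { fix k' j' assume a: "(k', j') \<in> desc (lc J)" "(k', j') \<in> desc (rc J)"
    hence "(j' - 1) div 2 ^ (k' - Suc (fst J)) = 2 * snd J - 1 - 1"
      "(j' - 1) div 2 ^ (k' - Suc (fst J)) = 2 * snd J - 1"
      by (auto simp: desc_def lc_def rc_def)
    hence False using assms by (cases "snd J") auto }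
  thus ?thesis by auto
qed

lemma desc_split:
  assumes "1 \<le> snd J"
  shows "desc J = insert J (desc (lc J) \<union> desc (rc J))"
proof (intro equalityI subsetI)
  fix I assume I: "I \<in> desc J"
  obtain k j where J: "J = (k, j)" by (cases J)
  obtain k' j' where II: "I = (k', j')" by (cases I)
  have h: "k \<le> k'" "1 \<le> j'" "(j' - 1) div 2 ^ (k' - k) = j - 1" using I J II by (auto simp: desc_def)
  show "I \<in> insert J (desc (lc J) \<union> desc (rc J))"
  proof (cases "k' = k")
    case True
    then show ?thesis using h assms J II by auto
  next
    case False
    then obtain d where d: "k' - k = Suc d" "k' - Suc k = d" using h by (metis Suc_diff_Suc diff_diff_left le_neq_implies_less plus_1_eq_Suc)
    define q where "q = (j' - 1) div 2 ^ d"
    have "(2::nat)^(k'-k) = 2^d * 2" using d by simp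
    hence "q div 2 = j - 1" using h(3) unfolding q_def by (simp add: div_mult2_eq)
    hence "q = 2 * j - 1 - 1 \<or> q = 2 * j - 1" using assms J by auto
    then show ?thesis using h d False J II q_def by (auto simp: desc_def lc_def rc_def)
  qed
next
  fix I assume I: "I \<in> insert J (desc (lc J) \<union> desc (rc J))"
  obtain k j where J: "J = (k, j)" by (cases J)
  obtain k' j' where II: "I = (k', j')" by (cases I)
  show "I \<in> desc J"
  proof (cases "I = J")
    case True then show ?thesis using desc_self assms by auto
  next
    case False
    then have h: "Suc k \<le> k'" "1 \<le> j'" "(j' - 1) div 2 ^ (k' - Suc k) = 2 * j - 1 - 1 \<or> (j' - 1) div 2 ^ (k' - Suc k) = 2 * j - 1"
      using I J II by (auto simp: desc_def lc_def rc_def)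
    have "k' - k = Suc (k' - Suc k)" using h by auto
    hence "(2::nat)^(k'-k) = 2^(k' - Suc k) * 2" by simp
    hence "(j' - 1) div 2 ^ (k' - k) = (j' - 1) div 2 ^ (k' - Suc k) div 2"
      by (simp add: div_mult2_eq)
    also have "\<dots> = j - 1" using h(3) assms J by auto
    finally show ?thesis using h J II by (auto simp: desc_def)
  qed
qed

lemma ivl_eq: "ivl (Suc k, j) = {(real j - 1) / 2 ^ k ..< real j / 2 ^ k}"
  by (simp add: ivl_def dyadic_interval_def)

lemma ivl_lc_eq: assumes "1 \<le> j" shows "ivl (lc (Suc k, j)) = {(real j - 1) / 2 ^ k ..< (real j - 1/2) / 2 ^ k}"
proof -
  have r: "real (2*j-1) = 2 * real j - 1" using assms by (simp add: of_nat_diff)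
  have "ivl (lc (Suc k, j)) = {(real (2*j-1) - 1) / 2^(Suc k) ..< real (2*j-1)/2^(Suc k)}"
    by (simp add: ivl_def dyadic_interval_def lc_def)
  also have "(real (2*j-1) - 1) / 2^(Suc k) = (real j - 1) / 2 ^ k" unfolding r by (simp add: field_simps)
  also have "real (2*j-1) / 2^(Suc k) = (real j - 1/2) / 2 ^ k" unfolding r by (simp add: field_simps)
  finally show ?thesis .
qed

lemma ivl_rc_eq: "ivl (rc (Suc k, j)) = {(real j - 1/2) / 2 ^ k ..< real j / 2 ^ k}"
  by (simp add: ivl_def dyadic_interval_def rc_def field_simps)

lemma ivl_split:
  assumes "1 \<le> fst J" "1 \<le> snd J"
  shows "ivl J = ivl (lc J) \<union> ivl (rc J)" "ivl (lc J) \<inter> ivl (rc J) = {}"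
proof -
  obtain k0 j where J0: "J = (k0, j)" by (cases J)
  then obtain k where J: "J = (Suc k, j)" using assms by (cases k0) auto
  have j: "1 \<le> j" using assms J by auto
  have a: "(real j - 1) / 2 ^ k \<le> (real j - 1/2) / 2 ^ k" "(real j - 1/2) / 2 ^ k \<le> real j / 2 ^ k"
    by (simp_all add: divide_right_mono)
  show "ivl J = ivl (lc J) \<union> ivl (rc J)" "ivl (lc J) \<inter> ivl (rc J) = {}"
    unfolding J ivl_eq ivl_lc_eq[OF j] ivl_rc_eq using a by auto
qed

lemma ivl_lc_dy: "1 \<le> snd J \<Longrightarrow> ivl (lc J) = dyadic_interval (fst J) (2 * int (snd J) - 1)"
  by (simp add: ivl_def lc_def of_nat_diff)

lemma ivl_rc_dy: "ivl (rc J) = dyadic_interval (fst J) (2 * int (snd J))"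
  by (simp add: ivl_def rc_def)

lemma ivl_01: assumes "nd J" shows "ivl J \<subseteq> {0..<1}"
proof -
  obtain k0 j where J0: "J = (k0, j)" by (cases J)
  then obtain k where J: "J = (Suc k, j)" using assms by (cases k0) (auto simp: nd_def)
  have "j \<le> 2 ^ k" "1 \<le> j" using assms J by (auto simp: nd_def)
  hence "real j \<le> 2 ^ k" "1 \<le> real j" by (simp_all add: of_nat_le_iff[symmetric])
  thus ?thesis unfolding J ivl_eq by (auto simp: field_simps)
qed

lemma ivl_ne: assumes "nd J" shows "(real (snd J) - 1) / 2 ^ (fst J - 1) \<in> ivl J"
  using assms by (simp add: ivl_def dyadic_interval_def nd_def divide_strict_right_mono)

lemma haar_zero: assumes "nd I" "t \<notin> ivl I" shows "haar (fst I) (int (snd I)) t = 0"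
proof -
  have "t \<notin> ivl (lc I)" "t \<notin> ivl (rc I)" using ivl_split[of I] assms by (auto simp: nd_def)
  thus ?thesis using assms by (simp add: haar_def ivl_lc_dy ivl_rc_dy nd_def)
qed

lemma haar_L: assumes "nd J" "t \<in> ivl (lc J)" shows "haar (fst J) (int (snd J)) t = sc (fst J)"
proof -
  have "t \<in> {0..<1}" using ivl_split[of J] ivl_01[OF assms(1)] assms by (auto simp: nd_def)
  thus ?thesis using assms by (simp add: haar_def ivl_lc_dy nd_def sc_def)
qed

lemma haar_R: assumes "nd J" "t \<in> ivl (rc J)" shows "haar (fst J) (int (snd J)) t = - sc (fst J)"
proof -
  have "t \<in> {0..<1}" "t \<notin> ivl (lc J)" using ivl_split[of J] ivl_01[OF assms(1)] assms by (auto simp: nd_def)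
  thus ?thesis using assms by (simp add: haar_def ivl_lc_dy ivl_rc_dy nd_def sc_def)
qed

lemma desc_cases: "1 \<le> snd J \<Longrightarrow> I \<in> desc J \<Longrightarrow> I = J \<or> I \<in> desc (lc J) \<or> I \<in> desc (rc J)"
  using desc_split by blast

lemma nd_ivl_desc: "nd J \<Longrightarrow> I \<in> desc J \<Longrightarrow> nd I \<and> ivl I \<subseteq> ivl J"
proof (induction "fst I - fst J" arbitrary: J rule: less_induct)
  case less
  have s: "1 \<le> snd J" "1 \<le> fst J" using less.prems by (auto simp: nd_def)
  show ?case
  proof (cases "I = J")
    case True then show ?thesis using less.prems by auto
  next
    case False
    then consider "I \<in> desc (lc J)" | "I \<in> desc (rc J)" using desc_cases[OF s(1) less.prems(2)] by blast
    then show ?thesis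
    proof cases
      case 1
      have "fst I - fst (lc J) < fst I - fst J" using desc_level[OF 1] by (simp add: lc_def)
      from less.hyps[OF this nd_lc[OF less.prems(1)] 1] show ?thesis using ivl_split(1)[OF s(2,1)] by auto
    next
      case 2
      have "fst I - fst (rc J) < fst I - fst J" using desc_level[OF 2] by (simp add: rc_def)
      from less.hyps[OF this nd_rc[OF less.prems(1)] 2] show ?thesis using ivl_split(1)[OF s(2,1)] by auto
    qed
  qed
qed

lemma ivl_Ico: assumes "nd J" shows "ivl J = {(real (snd J) - 1) / 2 ^ (fst J - 1) ..< real (snd J) / 2 ^ (fst J - 1)}"
  by (simp add: ivl_def dyadic_interval_def)

lemma ivl_sets[measurable]: "ivl J \<in> sets lborel"
  by (simp add: ivl_def dyadic_interval_def)

lemma ivl_sets_borel[measurable]: "ivl J \<in> sets borel"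
  by (simp add: ivl_def dyadic_interval_def)

lemma ivl_measure: assumes "nd J" shows "measure lborel (ivl J) = len (fst J)" "emeasure lborel (ivl J) < \<infinity>"
proof -
  have le: "(real (snd J) - 1) / 2 ^ (fst J - 1) \<le> real (snd J) / 2 ^ (fst J - 1)"
    by (simp add: divide_right_mono)
  show "measure lborel (ivl J) = len (fst J)" unfolding ivl_Ico[OF assms] using le
    by (simp add: len_def field_simps)
  show "emeasure lborel (ivl J) < \<infinity>" unfolding ivl_Ico[OF assms] using le by simp
qed

lemma setint_const: assumes "nd J" shows "set_integrable lborel (ivl J) (\<lambda>_. c::real)"
  unfolding set_integrable_def
  by (rule integrable_scaleR_left[OF integrable_real_indicator]) (use ivl_measure[OF assms] in auto)

lemma setint_const_val: assumes "nd J" shows "(LINT t:ivl J|lborel. (c::real)) = len (fst J) * c"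
proof -
  have "(LINT t:ivl J|lborel. c) = measure lborel (ivl J) *\<^sub>R c"
    by (rule set_integral_const) (use ivl_measure[OF assms] in auto)
  thus ?thesis using ivl_measure[OF assms] by simp
qed

definition hsum :: "(nat \<times> nat) set \<Rightarrow> (nat \<times> nat \<Rightarrow> 'a) \<Rightarrow> ('a \<Rightarrow> 'b::real_vector) \<Rightarrow> nat \<times> nat \<Rightarrow> real \<Rightarrow> 'b" where
  "hsum S x T J t = (\<Sum>(k, j)\<in>S \<inter> desc J. haar k (int j) t *\<^sub>R T (x (k, j)))"

definition off :: "(nat \<times> nat) set \<Rightarrow> (nat \<times> nat \<Rightarrow> 'a) \<Rightarrow> ('a \<Rightarrow> 'b::real_vector) \<Rightarrow> nat \<times> nat \<Rightarrow> 'b" where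
  "off S x T J = (if J \<in> S then sc (fst J) *\<^sub>R T (x J) else 0)"

definition pen :: "(nat \<times> nat) set \<Rightarrow> (nat \<times> nat \<Rightarrow> 'a::real_normed_vector) \<Rightarrow> nat \<times> nat \<Rightarrow> real" where
  "pen S x J = (\<Sum>(k, j)\<in>S \<inter> desc J. (norm (x (k, j)))\<^sup>2)"

definition EE :: "real \<Rightarrow> ('a::real_normed_vector \<Rightarrow> 'b::real_normed_vector) \<Rightarrow> (nat \<times> nat) set \<Rightarrow> (nat \<times> nat \<Rightarrow> 'a) \<Rightarrow> nat \<times> nat \<Rightarrow> 'b \<Rightarrow> real" where
  "EE c T S x J y = (LINT t:ivl J|lborel. (norm (y + hsum S x T J t))\<^sup>2) - c\<^sup>2 * pen S x J"

lemma sum_desc_split: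
  assumes "finite S" "1 \<le> snd J"
  shows "(\<Sum>I\<in>S \<inter> desc J. g I) = (if J \<in> S then g J else 0) + (\<Sum>I\<in>S \<inter> desc (lc J). g I) + (\<Sum>I\<in>S \<inter> desc (rc J). g I)"
proof -
  have e: "S \<inter> desc J = (S \<inter> {J}) \<union> ((S \<inter> desc (lc J)) \<union> (S \<inter> desc (rc J)))"
    using desc_split[OF assms(2)] by auto
  have d1: "(S \<inter> {J}) \<inter> ((S \<inter> desc (lc J)) \<union> (S \<inter> desc (rc J))) = {}" using lc_not rc_not by auto
  have d2: "(S \<inter> desc (lc J)) \<inter> (S \<inter> desc (rc J)) = {}" using desc_lc_rc_disj[OF assms(2)] by auto
  have "(\<Sum>I\<in>S \<inter> desc J. g I) = (\<Sum>I\<in>S \<inter> {J}. g I) + ((\<Sum>I\<in>S \<inter> desc (lc J). g I) + (\<Sum>I\<in>S \<inter> desc (rc J). g I))"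
    unfolding e using assms(1) d1 d2 by (simp add: sum.union_disjoint)
  moreover have "(\<Sum>I\<in>S \<inter> {J}. g I) = (if J \<in> S then g J else 0)" by (cases "J \<in> S") auto
  ultimately show ?thesis by (simp add: add.assoc)
qed

lemma hsum_L:
  assumes "finite S" "nd J" "t \<in> ivl (lc J)"
  shows "hsum S x T J t = off S x T J + hsum S x T (lc J) t"
proof -
  have s: "1 \<le> snd J" "1 \<le> fst J" using assms(2) by (auto simp: nd_def)
  have z: "(\<Sum>(k, j)\<in>S \<inter> desc (rc J). haar k (int j) t *\<^sub>R T (x (k, j))) = 0"
  proof (rule sum.neutral, clarify)
    fix k j assume "(k, j) \<in> S" "(k, j) \<in> desc (rc J)"
    hence "nd (k, j)" "ivl (k, j) \<subseteq> ivl (rc J)" using nd_ivl_desc[OF nd_rc[OF assms(2)]] by auto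
    moreover have "t \<notin> ivl (rc J)" using ivl_split(2)[OF s(2,1)] assms(3) by auto
    ultimately have "haar (fst (k,j)) (int (snd (k,j))) t = 0" by (intro haar_zero) auto
    thus "haar k (int j) t *\<^sub>R T (x (k, j)) = 0" by simp
  qed
  have "(if J \<in> S then (case J of (k, j) \<Rightarrow> haar k (int j) t *\<^sub>R T (x (k, j))) else 0) = off S x T J"
    using haar_L[OF assms(2,3)] by (cases J) (simp add: off_def)
  thus ?thesis unfolding hsum_def sum_desc_split[OF assms(1) s(1)] z by simp
qed

lemma hsum_R:
  assumes "finite S" "nd J" "t \<in> ivl (rc J)"
  shows "hsum S x T J t = - off S x T J + hsum S x T (rc J) t"
proof -
  have s: "1 \<le> snd J" "1 \<le> fst J" using assms(2) by (auto simp: nd_def)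
  have z: "(\<Sum>(k, j)\<in>S \<inter> desc (lc J). haar k (int j) t *\<^sub>R T (x (k, j))) = 0"
  proof (rule sum.neutral, clarify)
    fix k j assume "(k, j) \<in> S" "(k, j) \<in> desc (lc J)"
    hence "nd (k, j)" "ivl (k, j) \<subseteq> ivl (lc J)" using nd_ivl_desc[OF nd_lc[OF assms(2)]] by auto
    moreover have "t \<notin> ivl (lc J)" using ivl_split(2)[OF s(2,1)] assms(3) by auto
    ultimately have "haar (fst (k,j)) (int (snd (k,j))) t = 0" by (intro haar_zero) auto
    thus "haar k (int j) t *\<^sub>R T (x (k, j)) = 0" by simp
  qed
  have "(if J \<in> S then (case J of (k, j) \<Rightarrow> haar k (int j) t *\<^sub>R T (x (k, j))) else 0) = - off S x T J"
    using haar_R[OF assms(2,3)] by (cases J) (simp add: off_def)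
  thus ?thesis unfolding hsum_def sum_desc_split[OF assms(1) s(1)] z by simp
qed

lemma desc_empty: assumes "\<forall>I\<in>S. fst I < N" "N \<le> fst J" shows "S \<inter> desc J = {}"
  using assms desc_level by fastforce

lemma integ:
  fixes T :: "'a \<Rightarrow> 'b::real_normed_vector"
  assumes "finite S" "\<forall>I\<in>S. fst I < N"
  shows "nd J \<Longrightarrow> set_integrable lborel (ivl J) (\<lambda>t. (norm (y + hsum S x T J t))\<^sup>2)"
proof (induction "N - fst J" arbitrary: J y rule: less_induct)
  case less
  show ?case
  proof (cases "N \<le> fst J")
    case True
    hence "S \<inter> desc J = {}" using desc_empty assms by blast
    hence "hsum S x T J t = 0" for t by (simp add: hsum_def)
    thus ?thesis using setint_const[OF less.prems] by simp
  next
    case False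
    have s: "1 \<le> snd J" "1 \<le> fst J" using less.prems by (auto simp: nd_def)
    have "N - fst (lc J) < N - fst J" "N - fst (rc J) < N - fst J" using False by (auto simp: lc_def rc_def)
    note ih = less.hyps[OF this(1) nd_lc[OF less.prems]] less.hyps[OF this(2) nd_rc[OF less.prems]]
    have a: "set_integrable lborel (ivl (lc J)) (\<lambda>t. (norm (y + hsum S x T J t))\<^sup>2)"
      using ih(1)[of "y + off S x T J"]
      by (subst set_integrable_cong[OF refl refl, where f' = "\<lambda>t. (norm (y + off S x T J + hsum S x T (lc J) t))\<^sup>2"])
         (auto simp: hsum_L[OF assms(1) less.prems] add.assoc)
    have b: "set_integrable lborel (ivl (rc J)) (\<lambda>t. (norm (y + hsum S x T J t))\<^sup>2)"
      using ih(2)[of "y - off S x T J"]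
      by (subst set_integrable_cong[OF refl refl, where f' = "\<lambda>t. (norm (y - off S x T J + hsum S x T (rc J) t))\<^sup>2"])
         (auto simp: hsum_R[OF assms(1) less.prems] algebra_simps)
    show ?thesis unfolding ivl_split(1)[OF s(2,1)] by (rule set_integrable_Un[OF a b]) auto
  qed
qed

lemma EE_split:
  fixes T :: "'a::real_normed_vector \<Rightarrow> 'b::real_normed_vector"
  assumes "finite S" "\<forall>I\<in>S. fst I < N" "nd J"
  shows "EE c T S x J y = EE c T S x (lc J) (y + off S x T J) + EE c T S x (rc J) (y - off S x T J)
           - (if J \<in> S then c\<^sup>2 * (norm (x J))\<^sup>2 else 0)"
proof -
  have s: "1 \<le> snd J" "1 \<le> fst J" using assms(3) by (auto simp: nd_def)
  let ?f = "\<lambda>t. (norm (y + hsum S x T J t))\<^sup>2"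
  have i: "set_integrable lborel (ivl J) ?f" by (rule integ[OF assms])
  have iL: "set_integrable lborel (ivl (lc J)) ?f"
    by (rule set_integrable_subset[OF i]) (auto simp: ivl_split(1)[OF s(2,1)])
  have iR: "set_integrable lborel (ivl (rc J)) ?f"
    by (rule set_integrable_subset[OF i]) (auto simp: ivl_split(1)[OF s(2,1)])
  have "(LINT t:ivl J|lborel. ?f t) = (LINT t:ivl (lc J)|lborel. ?f t) + (LINT t:ivl (rc J)|lborel. ?f t)"
    unfolding ivl_split(1)[OF s(2,1)] by (rule set_integral_Un[OF ivl_split(2)[OF s(2,1)] iL iR])
  also have "(LINT t:ivl (lc J)|lborel. ?f t) = (LINT t:ivl (lc J)|lborel. (norm (y + off S x T J + hsum S x T (lc J) t))\<^sup>2)"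
    by (rule set_lebesgue_integral_cong) (auto simp: hsum_L[OF assms(1,3)] add.assoc)
  also have "(LINT t:ivl (rc J)|lborel. ?f t) = (LINT t:ivl (rc J)|lborel. (norm (y - off S x T J + hsum S x T (rc J) t))\<^sup>2)"
    by (rule set_lebesgue_integral_cong) (auto simp: hsum_R[OF assms(1,3)] algebra_simps)
  finally have I: "(LINT t:ivl J|lborel. ?f t) = (LINT t:ivl (lc J)|lborel. (norm (y + off S x T J + hsum S x T (lc J) t))\<^sup>2) + (LINT t:ivl (rc J)|lborel. (norm (y - off S x T J + hsum S x T (rc J) t))\<^sup>2)" .
  have P: "pen S x J = (if J \<in> S then (norm (x J))\<^sup>2 else 0) + pen S x (lc J) + pen S x (rc J)"
    unfolding pen_def sum_desc_split[OF assms(1) s(1)] by (cases J) auto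
  show ?thesis unfolding EE_def I P by (auto simp: algebra_simps)
qed

lemma EE_empty:
  assumes "S \<inter> desc J = {}" "nd J"
  shows "EE c T S x J y = len (fst J) * (norm y)\<^sup>2"
  using assms by (simp add: EE_def hsum_def pen_def setint_const_val)

datatype 'a tr = Leaf | Node 'a "'a tr" "'a tr"

fun full :: "nat \<Rightarrow> 'a tr \<Rightarrow> bool" where
  "full 0 z = (z = Leaf)"
| "full (Suc m) Leaf = False"
| "full (Suc m) (Node a l r) = (full m l \<and> full m r)"

fun VV :: "('a::real_normed_vector \<Rightarrow> 'b::real_normed_vector) \<Rightarrow> real \<Rightarrow> 'a tr \<Rightarrow> 'b \<Rightarrow> real" where
  "VV T c Leaf y = (norm y)\<^sup>2"
| "VV T c (Node a l r) y = VV T c l (y + T a) / 2 + VV T c r (y - T a) / 2 - c\<^sup>2 * (norm a)\<^sup>2"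

fun zeros :: "nat \<Rightarrow> 'a::zero tr" where
  "zeros 0 = Leaf"
| "zeros (Suc m) = Node 0 (zeros m) (zeros m)"

fun tree_of :: "(nat \<times> nat \<Rightarrow> 'a::real_vector) \<Rightarrow> nat \<times> nat \<Rightarrow> nat \<Rightarrow> 'a tr" where
  "tree_of x J 0 = Leaf"
| "tree_of x J (Suc m) = Node (sc (fst J) *\<^sub>R x J) (tree_of x (lc J) m) (tree_of x (rc J) m)"

lemma full_zeros: "full m (zeros m)"
  by (induction m) auto

lemma VV_zeros: "linear T \<Longrightarrow> VV T c (zeros m) y = (norm y)\<^sup>2"
  by (induction m arbitrary: y) (auto simp: linear_0)

lemma full_tree_of: "full m (tree_of x J m)"
  by (induction m arbitrary: J) auto

lemma len_Suc: "len (Suc k) = len k / 2" if "1 \<le> k"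
  using that by (cases k) (auto simp: len_def)

lemma sc_sq: "1 \<le> k \<Longrightarrow> (sc k)\<^sup>2 = 2 ^ (k - 1)"
proof -
  assume k: "1 \<le> k"
  have "(sc k)\<^sup>2 = 2 powr ((real k - 1) / 2) * 2 powr ((real k - 1) / 2)" by (simp add: sc_def power2_eq_square)
  also have "\<dots> = 2 powr (real k - 1)" by (simp add: powr_add[symmetric])
  also have "real k - 1 = real (k - 1)" using k by (simp add: of_nat_diff)
  also have "2 powr real (k - 1) = 2 ^ (k - 1)" by (simp add: powr_realpow)
  finally show ?thesis .
qed

lemma len_sc: "1 \<le> k \<Longrightarrow> len k * (sc k)\<^sup>2 = 1"
  by (simp add: sc_sq len_def)

lemma branch_iff: "J \<in> branch t \<longleftrightarrow> nd J \<and> t \<in> ivl J"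
  by (cases J) (simp add: branch_def nd_tree ivl_def)

lemma desc_lc_sub: "1 \<le> snd J \<Longrightarrow> desc (lc J) \<subseteq> desc J" and desc_rc_sub: "1 \<le> snd J \<Longrightarrow> desc (rc J) \<subseteq> desc J"
  using desc_split by blast+

lemma node_combine:
  fixes T :: "'a::real_normed_vector \<Rightarrow> 'b::real_normed_vector"
  assumes "linear T" "1 \<le> fst J" "J \<in> S"
  shows "len (fst J) * VV T c (Node (sc (fst J) *\<^sub>R x J) zL zR) y
     = len (Suc (fst J)) * VV T c zL (y + off S x T J) + len (Suc (fst J)) * VV T c zR (y - off S x T J) - c\<^sup>2 * (norm (x J))\<^sup>2"
proof -
  have o: "T (sc (fst J) *\<^sub>R x J) = off S x T J" using assms by (simp add: off_def linear_scale)
  have n: "(norm (sc (fst J) *\<^sub>R x J))\<^sup>2 = (sc (fst J))\<^sup>2 * (norm (x J))\<^sup>2" by (simp add: power_mult_distrib)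
  have l: "len (fst J) * ((sc (fst J))\<^sup>2 * (norm (x J))\<^sup>2) = (norm (x J))\<^sup>2"
    using len_sc[OF assms(2)] by (simp add: mult.assoc[symmetric])
  show ?thesis unfolding VV.simps o n len_Suc[OF assms(2)]
    using l by (simp add: algebra_simps)
qed

lemma main_ineq:
  fixes T :: "'a::real_normed_vector \<Rightarrow> 'b::real_normed_vector"
  assumes "finite S" "\<forall>I\<in>S. fst I < N" "linear T"
  shows "nd J \<Longrightarrow> (\<forall>t\<in>ivl J. card (S \<inter> desc J \<inter> branch t) \<le> m)
          \<Longrightarrow> \<exists>z. full m z \<and> EE c T S x J y \<le> len (fst J) * VV T c z y"
proof (induction "N - fst J" arbitrary: J m y rule: less_induct)
  case less
  have s: "1 \<le> snd J" "1 \<le> fst J" using less.prems by (auto simp: nd_def)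
  show ?case
  proof (cases "N \<le> fst J")
    case True
    hence "S \<inter> desc J = {}" using desc_empty assms by blast
    hence "EE c T S x J y = len (fst J) * VV T c (zeros m) y"
      using EE_empty less.prems(1) VV_zeros[OF assms(3)] by simp
    thus ?thesis using full_zeros by fastforce
  next
    case False
    have lt: "N - fst (lc J) < N - fst J" "N - fst (rc J) < N - fst J" using False by (auto simp: lc_def rc_def)
    have ndL: "nd (lc J)" and ndR: "nd (rc J)" using nd_lc nd_rc less.prems(1) by auto
    have ivL: "ivl (lc J) \<subseteq> ivl J" and ivR: "ivl (rc J) \<subseteq> ivl J" using ivl_split(1)[OF s(2,1)] by auto
    have fl: "fst (lc J) = Suc (fst J)" "fst (rc J) = Suc (fst J)" by (auto simp: lc_def rc_def)
    have split: "EE c T S x J y = EE c T S x (lc J) (y + off S x T J) + EE c T S x (rc J) (y - off S x T J)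
           - (if J \<in> S then c\<^sup>2 * (norm (x J))\<^sup>2 else 0)"
      by (rule EE_split[OF assms(1,2) less.prems(1)])
    show ?thesis
    proof (cases "J \<in> S")
      case True
      define t0 where "t0 = (real (snd J) - 1) / 2 ^ (fst J - 1)"
      have t0: "t0 \<in> ivl J" using ivl_ne[OF less.prems(1)] by (simp add: t0_def)
      have "J \<in> S \<inter> desc J \<inter> branch t0" using True desc_self[OF s(1)] t0 less.prems(1) by (simp add: branch_iff)
      hence "card (S \<inter> desc J \<inter> branch t0) > 0" using assms(1) by (auto simp: card_gt_0_iff)
      moreover have "card (S \<inter> desc J \<inter> branch t0) \<le> m" using less.prems(2) t0 by blast
      ultimately have "m > 0" by linarith
      then obtain m' where m: "m = Suc m'" using gr0_conv_Suc by blast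
      have cL: "\<forall>t\<in>ivl (lc J). card (S \<inter> desc (lc J) \<inter> branch t) \<le> m'"
      proof
        fix t assume t: "t \<in> ivl (lc J)"
        hence tJ: "t \<in> ivl J" using ivL by auto
        have J: "J \<in> S \<inter> desc J \<inter> branch t" using True desc_self[OF s(1)] tJ less.prems(1) by (simp add: branch_iff)
        have "S \<inter> desc (lc J) \<inter> branch t \<subseteq> (S \<inter> desc J \<inter> branch t) - {J}"
          using desc_lc_sub[OF s(1)] lc_not by auto
        hence "card (S \<inter> desc (lc J) \<inter> branch t) \<le> card ((S \<inter> desc J \<inter> branch t) - {J})"
          by (rule card_mono[rotated]) (use assms(1) in auto)
        also have "\<dots> = card (S \<inter> desc J \<inter> branch t) - 1" using J by simp
        also have "\<dots> \<le> m'" using less.prems(2) tJ m by auto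
        finally show "card (S \<inter> desc (lc J) \<inter> branch t) \<le> m'" .
      qed
      have cR: "\<forall>t\<in>ivl (rc J). card (S \<inter> desc (rc J) \<inter> branch t) \<le> m'"
      proof
        fix t assume t: "t \<in> ivl (rc J)"
        hence tJ: "t \<in> ivl J" using ivR by auto
        have J: "J \<in> S \<inter> desc J \<inter> branch t" using True desc_self[OF s(1)] tJ less.prems(1) by (simp add: branch_iff)
        have "S \<inter> desc (rc J) \<inter> branch t \<subseteq> (S \<inter> desc J \<inter> branch t) - {J}"
          using desc_rc_sub[OF s(1)] rc_not by auto
        hence "card (S \<inter> desc (rc J) \<inter> branch t) \<le> card ((S \<inter> desc J \<inter> branch t) - {J})"
          by (rule card_mono[rotated]) (use assms(1) in auto)
        also have "\<dots> = card (S \<inter> desc J \<inter> branch t) - 1" using J by simp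
        also have "\<dots> \<le> m'" using less.prems(2) tJ m by auto
        finally show "card (S \<inter> desc (rc J) \<inter> branch t) \<le> m'" .
      qed
      obtain zL where zL: "full m' zL" "EE c T S x (lc J) (y + off S x T J) \<le> len (fst (lc J)) * VV T c zL (y + off S x T J)"
        using less.hyps[OF lt(1) ndL cL] by blast
      obtain zR where zR: "full m' zR" "EE c T S x (rc J) (y - off S x T J) \<le> len (fst (rc J)) * VV T c zR (y - off S x T J)"
        using less.hyps[OF lt(2) ndR cR] by blast
      let ?z = "Node (sc (fst J) *\<^sub>R x J) zL zR"
      have "full m ?z" using zL zR m by simp
      moreover have "EE c T S x J y \<le> len (fst J) * VV T c ?z y"
        unfolding node_combine[OF assms(3) s(2) True] split using zL(2) zR(2) True fl by simp
      ultimately show ?thesis by blast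
    next
      case False
      have o: "off S x T J = 0" using False by (simp add: off_def)
      have cL: "\<forall>t\<in>ivl (lc J). card (S \<inter> desc (lc J) \<inter> branch t) \<le> m"
      proof
        fix t assume t: "t \<in> ivl (lc J)"
        hence tJ: "t \<in> ivl J" using ivL by auto
        have "card (S \<inter> desc (lc J) \<inter> branch t) \<le> card (S \<inter> desc J \<inter> branch t)"
          by (rule card_mono) (use assms(1) desc_lc_sub[OF s(1)] in auto)
        thus "card (S \<inter> desc (lc J) \<inter> branch t) \<le> m" using less.prems(2) tJ by auto
      qed
      have cR: "\<forall>t\<in>ivl (rc J). card (S \<inter> desc (rc J) \<inter> branch t) \<le> m"
      proof
        fix t assume t: "t \<in> ivl (rc J)"
        hence tJ: "t \<in> ivl J" using ivR by auto
        have "card (S \<inter> desc (rc J) \<inter> branch t) \<le> card (S \<inter> desc J \<inter> branch t)"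
          by (rule card_mono) (use assms(1) desc_rc_sub[OF s(1)] in auto)
        thus "card (S \<inter> desc (rc J) \<inter> branch t) \<le> m" using less.prems(2) tJ by auto
      qed
      obtain zL where zL: "full m zL" "EE c T S x (lc J) y \<le> len (fst (lc J)) * VV T c zL y"
        using less.hyps[OF lt(1) ndL cL] o by fastforce
      obtain zR where zR: "full m zR" "EE c T S x (rc J) y \<le> len (fst (rc J)) * VV T c zR y"
        using less.hyps[OF lt(2) ndR cR] o by fastforce
      have e: "EE c T S x J y \<le> len (fst J) / 2 * VV T c zL y + len (fst J) / 2 * VV T c zR y"
        using split zL(2) zR(2) False o fl len_Suc[OF s(2)] by simp
      have lp: "len (fst J) > 0" by (simp add: len_def)
      show ?thesis
      proof (cases "VV T c zR y \<le> VV T c zL y")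
        case True
        have "len (fst J) / 2 * VV T c zR y \<le> len (fst J) / 2 * VV T c zL y"
          by (rule mult_left_mono) (use True lp in auto)
        hence "EE c T S x J y \<le> len (fst J) * VV T c zL y" using e by linarith
        thus ?thesis using zL(1) by blast
      next
        case False
        have "len (fst J) / 2 * VV T c zL y \<le> len (fst J) / 2 * VV T c zR y"
          by (rule mult_left_mono) (use False lp in auto)
        hence "EE c T S x J y \<le> len (fst J) * VV T c zR y" using e by linarith
        thus ?thesis using zR(1) by blast
      qed
    qed
  qed
qed

lemma finite_layers: "finite (dyadic_layers 1 n)"
proof (rule finite_subset)
  show "dyadic_layers 1 n \<subseteq> {..n} \<times> {..(2::nat)^n}"
  proof (rule subsetI)
    fix p assume p: "p \<in> dyadic_layers 1 n"
    obtain k j where pk: "p = (k, j)" by (cases p)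
    have kn: "k \<le> n" and jk: "j \<le> 2 ^ (k - 1)" using p pk by (auto simp: dyadic_layers_def)
    have "(2::nat) ^ (k - 1) \<le> 2 ^ n" using kn by (intro power_increasing) auto
    hence "j \<le> 2 ^ n" using jk by linarith
    thus "p \<in> {..n} \<times> {..(2::nat)^n}" using kn pk by auto
  qed
qed auto

lemma D_eq:
  fixes T :: "'a::real_normed_vector \<Rightarrow> 'b::real_normed_vector"
  assumes "linear T"
  shows "nd J \<Longrightarrow> fst J \<le> n + 1 \<Longrightarrow>
    EE c T (dyadic_layers 1 n) x J y = len (fst J) * VV T c (tree_of x J (n + 1 - fst J)) y"
proof (induction "n + 1 - fst J" arbitrary: J y rule: less_induct)
  case less
  have s: "1 \<le> snd J" "1 \<le> fst J" using less.prems by (auto simp: nd_def)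
  have fin: "finite (dyadic_layers 1 n)" by (rule finite_layers)
  have lev: "\<forall>I\<in>dyadic_layers 1 n. fst I < n + 1" by (auto simp: dyadic_layers_def)
  show ?case
  proof (cases "fst J = n + 1")
    case True
    hence "dyadic_layers 1 n \<inter> desc J = {}" using desc_empty[OF lev] by simp
    from EE_empty[OF this less.prems(1)] show ?thesis using True by simp
  next
    case False
    hence k: "fst J \<le> n" using less.prems(2) by simp
    have JS: "J \<in> dyadic_layers 1 n" using less.prems(1) k by (cases J) (auto simp: nd_def dyadic_layers_def)
    have fl: "fst (lc J) = Suc (fst J)" "fst (rc J) = Suc (fst J)" by (auto simp: lc_def rc_def)
    have lt: "n + 1 - fst (lc J) < n + 1 - fst J" "n + 1 - fst (rc J) < n + 1 - fst J" using k fl by auto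
    have m: "n + 1 - fst J = Suc (n + 1 - Suc (fst J))" using k by simp
    have ihL: "EE c T (dyadic_layers 1 n) x (lc J) y' = len (Suc (fst J)) * VV T c (tree_of x (lc J) (n + 1 - Suc (fst J))) y'" for y'
      using less.hyps[OF lt(1) nd_lc[OF less.prems(1)]] k fl by simp
    have ihR: "EE c T (dyadic_layers 1 n) x (rc J) y' = len (Suc (fst J)) * VV T c (tree_of x (rc J) (n + 1 - Suc (fst J))) y'" for y'
      using less.hyps[OF lt(2) nd_rc[OF less.prems(1)]] k fl by simp
    show ?thesis
      unfolding EE_split[OF fin lev less.prems(1)] m tree_of.simps node_combine[OF assms s(2) JS] ihL ihR
      using JS by simp
  qed
qed

lemma tree_of_local: "1 \<le> snd J \<Longrightarrow> (\<forall>I\<in>desc J. x I = x' I) \<Longrightarrow> tree_of x J m = tree_of x' J m"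
proof (induction m arbitrary: J)
  case 0 then show ?case by simp
next
  case (Suc m)
  have "1 \<le> snd (lc J)" "1 \<le> snd (rc J)" using Suc.prems by (auto simp: lc_def rc_def)
  moreover have "\<forall>I\<in>desc (lc J). x I = x' I" "\<forall>I\<in>desc (rc J). x I = x' I"
    using Suc.prems desc_lc_sub desc_rc_sub by blast+
  moreover have "x J = x' J" using Suc.prems desc_self by blast
  ultimately show ?case using Suc.IH by simp
qed

lemma tree_of_surj: "full m z \<Longrightarrow> 1 \<le> snd J \<Longrightarrow> \<exists>x. tree_of x J m = z"
proof (induction m arbitrary: z J)
  case 0 then show ?case by simp
next
  case (Suc m)
  then obtain a l r where z: "z = Node a l r" "full m l" "full m r" by (cases z) auto
  have s: "1 \<le> snd (lc J)" "1 \<le> snd (rc J)" using Suc.prems by (auto simp: lc_def rc_def)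
  obtain xL where xL: "tree_of xL (lc J) m = l" using Suc.IH[OF z(2) s(1)] by blast
  obtain xR where xR: "tree_of xR (rc J) m = r" using Suc.IH[OF z(3) s(2)] by blast
  define x where "x = (\<lambda>I. if I = J then (1 / sc (fst J)) *\<^sub>R a else if I \<in> desc (lc J) then xL I else xR I)"
  have "tree_of x (lc J) m = tree_of xL (lc J) m"
    by (rule tree_of_local[OF s(1)]) (use lc_not in \<open>auto simp: x_def\<close>)
  moreover have "tree_of x (rc J) m = tree_of xR (rc J) m"
    by (rule tree_of_local[OF s(2)]) (use rc_not desc_lc_rc_disj[OF Suc.prems(2)] in \<open>auto simp: x_def\<close>)
  moreover have "sc (fst J) *\<^sub>R x J = a" by (simp add: x_def sc_def)
  ultimately show ?case using xL xR z by auto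
qed

lemma VV_bound:
  fixes T :: "'a::real_normed_vector \<Rightarrow> 'b::real_normed_vector"
  assumes K: "\<forall>v. norm (T v) \<le> norm v * K" "0 \<le> K" and c: "2 ^ n * K\<^sup>2 \<le> c\<^sup>2" and lin: "linear T"
  shows "full m z \<Longrightarrow> m \<le> n \<Longrightarrow> VV T c z y \<le> 2 ^ m * (norm y)\<^sup>2"
proof (induction m arbitrary: z y)
  case 0 then show ?case by simp
next
  case (Suc m)
  then obtain a l r where z: "z = Node a l r" "full m l" "full m r" by (cases z) auto
  have ihl: "VV T c l (y + T a) \<le> 2 ^ m * (norm (y + T a))\<^sup>2" using Suc z by simp
  have ihr: "VV T c r (y - T a) \<le> 2 ^ m * (norm (y - T a))\<^sup>2" using Suc z by simp
  have sq: "(norm (y + b))\<^sup>2 \<le> 2 * (norm y)\<^sup>2 + 2 * (norm b)\<^sup>2" for y b :: 'b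
  proof -
    have "norm (y + b) \<le> norm y + norm b" by (rule norm_triangle_ineq)
    hence "(norm (y + b))\<^sup>2 \<le> (norm y + norm b)\<^sup>2" by (simp add: power_mono)
    also have "\<dots> \<le> 2 * (norm y)\<^sup>2 + 2 * (norm b)\<^sup>2" by (smt (verit) sum_squares_bound power2_sum)
    finally show ?thesis .
  qed
  have s1: "(norm (y - T a))\<^sup>2 \<le> 2 * (norm y)\<^sup>2 + 2 * (norm (T a))\<^sup>2" using sq[of y "- T a"] by simp
  have s2: "(norm (y + T a))\<^sup>2 \<le> 2 * (norm y)\<^sup>2 + 2 * (norm (T a))\<^sup>2" using sq[of y "T a"] by simp
  have Ta: "(norm (T a))\<^sup>2 \<le> K\<^sup>2 * (norm a)\<^sup>2"
  proof -
    have "(norm (T a))\<^sup>2 \<le> (norm a * K)\<^sup>2" using K(1) by (simp add: power_mono)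
    thus ?thesis by (simp add: power_mult_distrib mult.commute)
  qed
  have p: "(2::real) ^ Suc m \<le> 2 ^ n" using Suc.prems(2) by (intro power_increasing) auto
  have "2 ^ Suc m * K\<^sup>2 * (norm a)\<^sup>2 \<le> c\<^sup>2 * (norm a)\<^sup>2"
    using p c by (intro mult_right_mono) (auto intro: order_trans[OF mult_right_mono])
  moreover have "VV T c z y \<le> 2 ^ m * (2 * (norm y)\<^sup>2) + 2 ^ m * (2 * (norm (T a))\<^sup>2) - c\<^sup>2 * (norm a)\<^sup>2"
  proof -
    have "VV T c l (y + T a) / 2 + VV T c r (y - T a) / 2 \<le> 2 ^ m * (2 * (norm y)\<^sup>2 + 2 * (norm (T a))\<^sup>2)"
    proof -
      have "2 ^ m * (norm (y - T a))\<^sup>2 \<le> 2 ^ m * (2 * (norm y)\<^sup>2 + 2 * (norm (T a))\<^sup>2)"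
        by (rule mult_left_mono[OF s1]) simp
      moreover have "2 ^ m * (norm (y + T a))\<^sup>2 \<le> 2 ^ m * (2 * (norm y)\<^sup>2 + 2 * (norm (T a))\<^sup>2)"
        by (rule mult_left_mono[OF s2]) simp
      ultimately show ?thesis using ihl ihr by linarith
    qed
    thus ?thesis using z by (simp add: distrib_left)
  qed
  moreover have "2 ^ m * (2 * (norm (T a))\<^sup>2) \<le> 2 ^ Suc m * K\<^sup>2 * (norm a)\<^sup>2"
  proof -
    have "2 ^ m * (2 * (norm (T a))\<^sup>2) = 2 ^ Suc m * (norm (T a))\<^sup>2" by simp
    also have "\<dots> \<le> 2 ^ Suc m * (K\<^sup>2 * (norm a)\<^sup>2)" by (rule mult_left_mono[OF Ta]) simp
    finally show ?thesis by (simp add: mult.assoc)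
  qed
  moreover have "2 ^ Suc m * (norm y)\<^sup>2 = 2 ^ m * (2 * (norm y)\<^sup>2)" by simp
  ultimately show ?case by linarith
qed

lemma tree_root: "dyadic_tree \<subseteq> desc (1, 1)"
proof clarify
  fix k j assume "(k, j) \<in> dyadic_tree"
  hence h: "1 \<le> k" "1 \<le> j" "j \<le> 2 ^ (k - 1)" by (auto simp: dyadic_tree_def)
  hence "j - 1 < 2 ^ (k - 1)" by linarith
  hence "(j - 1) div 2 ^ (k - 1) = 0" by simp
  thus "(k, j) \<in> desc (1, 1)" using h by (simp add: desc_def)
qed

lemma ivl_root: "ivl (1, 1) = {0..<1}"
  by (simp add: ivl_def dyadic_interval_def)

lemma nd_root: "nd (1, 1)" by (simp add: nd_def)

lemma EE_root:
  assumes "S \<subseteq> dyadic_tree"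
  shows "EE c T S x (1, 1) 0 = (LINT t:{0..<1}|lborel. (norm (\<Sum>(k, j)\<in>S. haar k (int j) t *\<^sub>R T (x (k, j))))\<^sup>2)
            - c\<^sup>2 * (\<Sum>(k, j)\<in>S. (norm (x (k, j)))\<^sup>2)"
proof -
  have e: "S \<inter> desc (1, 1) = S" using assms tree_root by blast
  show ?thesis unfolding EE_def hsum_def pen_def ivl_root e by simp
qed

lemma L2_iff:
  assumes "0 \<le> c" "0 \<le> P"
  shows "(L2_norm01 f \<le> c * sqrt P) \<longleftrightarrow> (LINT t:{0..<1}|lborel. (norm (f t))\<^sup>2) \<le> c\<^sup>2 * P"
proof -
  have "c * sqrt P = sqrt (c\<^sup>2 * P)" using assms by (simp add: real_sqrt_mult)
  thus ?thesis by (simp add: L2_norm01_def)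
qed

lemma inf_close:
  fixes d P A :: real
  assumes "0 \<le> d" "0 \<le> P" "\<forall>c>d. A \<le> c\<^sup>2 * P"
  shows "A \<le> d\<^sup>2 * P"
proof (rule ccontr)
  assume n: "\<not> A \<le> d\<^sup>2 * P"
  show False
  proof (cases "P = 0")
    case True
    thus False using n assms(3)[rule_format, of "d + 1"] by simp
  next
    case False
    hence P: "P > 0" using assms(2) by simp
    have dA: "d\<^sup>2 < A / P" using n P by (simp add: field_simps)
    moreover have "0 \<le> d\<^sup>2" by simp
    ultimately have AP: "0 \<le> A / P" by linarith
    have ds: "d < sqrt (A / P)" using dA real_less_rsqrt by blast
    define c1 where "c1 = (d + sqrt (A / P)) / 2"
    have c1: "d < c1" "c1 < sqrt (A / P)" "0 \<le> c1" using ds assms(1) by (auto simp: c1_def)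
    have "c1\<^sup>2 < (sqrt (A / P))\<^sup>2" using c1 by (intro power_strict_mono) auto
    also have "(sqrt (A / P))\<^sup>2 = A / P" using AP by (rule real_sqrt_pow2)
    finally have "c1\<^sup>2 * P < A" using P by (simp add: field_simps)
    thus False using assms(3) c1(1) by force
  qed
qed

theorem theorem3p10:
  fixes T :: "'a::banach \<Rightarrow> 'b::banach" and F :: "(nat \<times> nat) set" and n :: nat
  assumes "finite F" and "F \<subseteq> dyadic_tree" and "local_height F = n"
    and "bounded_linear T"
  shows "tau T F \<le> tau T (dyadic_layers 1 n)"
proof -
  define D where "D = dyadic_layers 1 n"
  define A :: "(nat \<times> nat) set \<Rightarrow> (nat \<times> nat \<Rightarrow> 'a) \<Rightarrow> real" where
    "A = (\<lambda>S x. LINT t:{0..<1}|lborel. (norm (\<Sum>(k, j)\<in>S. haar k (int j) t *\<^sub>R T (x (k, j))))\<^sup>2)"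
  define P :: "(nat \<times> nat) set \<Rightarrow> (nat \<times> nat \<Rightarrow> 'a) \<Rightarrow> real" where
    "P = (\<lambda>S x. \<Sum>(k, j)\<in>S. (norm (x (k, j)))\<^sup>2)"
  have Pnn: "0 \<le> P S x" for S x unfolding P_def by (rule sum_nonneg) auto
  define setS where "setS = (\<lambda>S. {c. c \<ge> 0 \<and> (\<forall>x :: nat \<times> nat \<Rightarrow> 'a.
      L2_norm01 (\<lambda>t. \<Sum>(k, j)\<in>S. haar k (int j) t *\<^sub>R T (x (k, j)))
        \<le> c * sqrt (\<Sum>(k, j)\<in>S. (norm (x (k, j)))\<^sup>2))})"
  have tauS: "tau T S = Inf (setS S)" for S by (simp add: tau_def setS_def)
  have memS: "c \<in> setS S \<longleftrightarrow> c \<ge> 0 \<and> (\<forall>x. A S x \<le> c\<^sup>2 * P S x)" for c S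
  proof -
    have "(L2_norm01 (\<lambda>t. \<Sum>(k, j)\<in>S. haar k (int j) t *\<^sub>R T (x (k, j)))
        \<le> c * sqrt (\<Sum>(k, j)\<in>S. (norm (x (k, j)))\<^sup>2)) \<longleftrightarrow> A S x \<le> c\<^sup>2 * P S x" if "c \<ge> 0" for x
    proof -
      have p: "0 \<le> (\<Sum>(k, j)\<in>S. (norm (x (k, j)))\<^sup>2)" by (rule sum_nonneg) auto
      show ?thesis unfolding A_def P_def by (rule L2_iff[OF that p])
    qed
    thus ?thesis unfolding setS_def by auto
  qed
  have EEr: "S \<subseteq> dyadic_tree \<Longrightarrow> EE c T S x (1, 1) 0 = A S x - c\<^sup>2 * P S x" for S c x
    unfolding A_def P_def by (rule EE_root)
  have lin: "linear T" using assms(4) bounded_linear.linear by blast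
  have Dtree: "D \<subseteq> dyadic_tree" by (auto simp: D_def dyadic_layers_def dyadic_tree_def)
  have Deq: "EE c T D x (1, 1) 0 = VV T c (tree_of x (1, 1) n) 0" for c x
    using D_eq[OF lin nd_root, of n c x 0] by (simp add: D_def len_def)
  obtain K where K: "\<forall>v. norm (T v) \<le> norm v * K" "K > 0"
    using bounded_linear.pos_bounded[OF assms(4)] by blast
  define c0 where "c0 = sqrt (2 ^ n) * K"
  have c0: "c0\<^sup>2 = 2 ^ n * K\<^sup>2" "0 \<le> c0" using K(2) by (simp_all add: c0_def power_mult_distrib)
  have "c0 \<in> setS D"
  proof -
    have "A D x \<le> c0\<^sup>2 * P D x" for x
    proof -
      have cle: "2 ^ n * K\<^sup>2 \<le> c0\<^sup>2" using c0 by simp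
      have "VV T c0 (tree_of x (1, 1) n) 0 \<le> 2 ^ n * (norm (0::'b))\<^sup>2"
        by (rule VV_bound[OF K(1) less_imp_le[OF K(2)] cle lin full_tree_of order_refl])
      thus ?thesis using Deq[of c0 x] EEr[OF Dtree, of c0 x] by simp
    qed
    thus ?thesis using memS c0 by blast
  qed
  hence ne: "setS D \<noteq> {}" by blast
  have bdd: "bdd_below (setS S)" for S unfolding bdd_below_def using memS by blast
  define cD where "cD = Inf (setS D)"
  have cD0: "0 \<le> cD" unfolding cD_def by (rule cInf_greatest[OF ne]) (use memS in blast)
  have cDD: "A D x \<le> cD\<^sup>2 * P D x" for x
  proof (rule inf_close[OF cD0 Pnn], intro allI impI)
    fix c assume "cD < c"
    then obtain c' where c': "c' \<in> setS D" "c' < c" using cInf_less_iff[OF ne bdd] cD_def by blast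
    hence "A D x \<le> c'\<^sup>2 * P D x" "0 \<le> c'" using memS by blast+
    moreover have "c'\<^sup>2 * P D x \<le> c\<^sup>2 * P D x"
      using c' \<open>0 \<le> c'\<close> Pnn by (intro mult_right_mono power_mono) auto
    ultimately show "A D x \<le> c\<^sup>2 * P D x" by linarith
  qed
  have Vneg: "full n z \<Longrightarrow> VV T cD z 0 \<le> 0" for z
  proof -
    assume "full n z"
    then obtain x where "tree_of x (1, 1) n = z" using tree_of_surj by fastforce
    thus ?thesis using Deq[of cD x] EEr[OF Dtree, of cD x] cDD[of x] by simp
  qed
  obtain N where N: "\<forall>I\<in>F. fst I < N"
    using assms(1) finite_nat_set_iff_bounded[of "fst ` F"] by auto
  have cardF: "\<forall>t\<in>ivl (1, 1). card (F \<inter> desc (1, 1) \<inter> branch t) \<le> n"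
  proof
    fix t :: real assume "t \<in> ivl (1, 1)"
    hence t: "t \<in> {0..<1}" unfolding ivl_root .
    have e: "F \<inter> desc (1, 1) = F" using assms(2) tree_root by blast
    have fin: "finite ((\<lambda>t. card (F \<inter> branch t)) ` {0..<1})"
    proof (rule finite_subset)
      show "(\<lambda>t. card (F \<inter> branch t)) ` {0..<1} \<subseteq> {..card F}"
        using assms(1) by (auto intro: card_mono)
    qed auto
    have "card (F \<inter> branch t) \<le> local_height F"
      unfolding local_height_def by (rule Max_ge[OF fin]) (use t in auto)
    thus "card (F \<inter> desc (1, 1) \<inter> branch t) \<le> n" using e assms(3) by simp
  qed
  have "cD \<in> setS F"
  proof -
    have "A F x \<le> cD\<^sup>2 * P F x" for x
    proof -
      obtain z where z: "full n z" "EE cD T F x (1, 1) 0 \<le> len (fst (1::nat, 1::nat)) * VV T cD z 0"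
        using main_ineq[OF assms(1) N lin nd_root cardF] by blast
      have "len (fst (1::nat, 1::nat)) = 1" by (simp add: len_def)
      thus ?thesis using z Vneg[OF z(1)] EEr[OF assms(2), of cD x] by simp
    qed
    thus ?thesis using memS cD0 by blast
  qed
  hence "tau T F \<le> cD" unfolding tauS by (rule cInf_lower[OF _ bdd])
  thus ?thesis unfolding cD_def D_def tauS .
qed

end
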